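(* Let $(\mathcal{A},\mathcal{E})$ be a finite, essentially small exact category. Then $\mu_\mathcal{E}:(\mathrm{ind}\mathcal{A},\subset_\mathcal{E})\to(\mathfrak{S}(\mathbb{N}),\lll)$ is a measure, i.e. order-preserving; moreover $X\subsetneq_\mathcal{E}Y$ implies $\mu_\mathcal{E}(X)\lll\mu_\mathcal{E}(Y)$.
   Context: $(\mathcal{A},\mathcal{E})$ is a Quillen exact category; admissible monics are morphisms $i$ with $(i,d)\in\mathcal{E}$ for some $d$. $X\subset_\mathcal{E}Y$ means there is an admissible monic $X\to Y$, and $X\subsetneq_\mathcal{E}Y$ means there is one that is not an isomorphism. The $\mathcal{E}$-length $l_\mathcal{E}(X)$ is the supremum of all $n$ such that there is a chain $0=X_0\to\cdots\to X_n=X$ of admissible monics none of which is an isomorphism; $(\mathcal{A},\mathcal{E})$ is finite if $l_\mathcal{E}(X)<\infty$ for all $X$. $\mathrm{ind}\mathcal{A}$ is the set of isomorphism classes of indecomposable objects, partially ordered by $\subset_\mathcal{E}$. $\mathfrak{S}(\mathbb{N})$ is the set of finite nonempty sequences of natural numbers, totally ordered by: $x\lll y$ iff $x=y$, or $x$ is a proper prefix of $y$, or at the first index $i$ where $x_i\neq y_i$ (both defined) one has $x_i>y_i$ (lexicographic order with the order of $\mathbb{N}$ reversed). For indecomposable $X$, $\mu_\mathcal{E}(X)$ is the $\lll$-maximum of the vectors $(l_\mathcal{E}(X_1),\dots,l_\mathcal{E}(X_n))$ over all chains $X_1\subsetneq_\mathcal{E}X_2\subsetneq_\mathcal{E}\cdots\subsetneq_\mathcal{E}X_n=X$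 ($n\ge1$) with all $X_i$ indecomposable. A measure for a poset is an order-preserving map to a totally ordered set. *)

theory Defs
  imports "HOL-Library.Extended_Nat"
begin

text \<open>A (small) category with typed, pairwise disjoint hom-sets, together with the
  preadditive structure (abelian group operations on each hom-set).
  \<open>cmp g f\<close> is the composite \<open>g \<circ> f\<close>.\<close>

record ('o, 'm) addcat =
  Ob    :: "'o set"
  Hom   :: "'o \<Rightarrow> 'o \<Rightarrow> 'm set"
  cmp   :: "'m \<Rightarrow> 'm \<Rightarrow> 'm"
  ident :: "'o \<Rightarrow> 'm"
  plus  :: "'m \<Rightarrow> 'm \<Rightarrow> 'm"
  zer   :: "'o \<Rightarrow> 'o \<Rightarrow> 'm"
  neg   :: "'m \<Rightarrow> 'm"

definition is_category :: "('o, 'm, 'x) addcat_scheme \<Rightarrow> bool" where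
  "is_category C \<longleftrightarrow>
     (\<forall>A B. Hom C A B \<noteq> {} \<longrightarrow> A \<in> Ob C \<and> B \<in> Ob C) \<and>
     (\<forall>A B A' B' f. f \<in> Hom C A B \<longrightarrow> f \<in> Hom C A' B' \<longrightarrow> A = A' \<and> B = B') \<and>
     (\<forall>A \<in> Ob C. ident C A \<in> Hom C A A) \<and>
     (\<forall>A B D f g. f \<in> Hom C A B \<longrightarrow> g \<in> Hom C B D \<longrightarrow> cmp C g f \<in> Hom C A D) \<and>
     (\<forall>A B D E f g h. f \<in> Hom C A B \<longrightarrow> g \<in> Hom C B D \<longrightarrow> h \<in> Hom C D E \<longrightarrow>
        cmp C h (cmp C g f) = cmp C (cmp C h g) f) \<and>
     (\<forall>A B f. f \<in> Hom C A B \<longrightarrow> cmp C f (ident C A) = f \<and> cmp C (ident C B) f = f)"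

definition is_preadditive :: "('o, 'm, 'x) addcat_scheme \<Rightarrow> bool" where
  "is_preadditive C \<longleftrightarrow> is_category C \<and>
     (\<forall>A \<in> Ob C. \<forall>B \<in> Ob C.
        zer C A B \<in> Hom C A B \<and>
        (\<forall>f \<in> Hom C A B. \<forall>g \<in> Hom C A B. plus C f g \<in> Hom C A B) \<and>
        (\<forall>f \<in> Hom C A B. neg C f \<in> Hom C A B) \<and>
        (\<forall>f \<in> Hom C A B. \<forall>g \<in> Hom C A B. \<forall>h \<in> Hom C A B.
            plus C (plus C f g) h = plus C f (plus C g h)) \<and>
        (\<forall>f \<in> Hom C A B. \<forall>g \<in> Hom C A B. plus C f g = plus C g f) \<and>
        (\<forall>f \<in> Hom C A B. plus C f (zer C A B) = f) \<and>
        (\<forall>f \<in> Hom C A B. plus C f (neg C f) = zer C A B)) \<and>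
     (\<forall>A B D f g h. f \<in> Hom C A B \<longrightarrow> g \<in> Hom C B D \<longrightarrow> h \<in> Hom C B D \<longrightarrow>
        cmp C (plus C g h) f = plus C (cmp C g f) (cmp C h f)) \<and>
     (\<forall>A B D f g h. f \<in> Hom C A B \<longrightarrow> g \<in> Hom C A B \<longrightarrow> h \<in> Hom C B D \<longrightarrow>
        cmp C h (plus C f g) = plus C (cmp C h f) (cmp C h g))"

definition is_zero_obj :: "('o, 'm, 'x) addcat_scheme \<Rightarrow> 'o \<Rightarrow> bool" where
  "is_zero_obj C Z \<longleftrightarrow> Z \<in> Ob C \<and>
     (\<forall>A \<in> Ob C. Hom C Z A = {zer C Z A} \<and> Hom C A Z = {zer C A Z})"

definition is_biprod :: "('o, 'm, 'x) addcat_scheme \<Rightarrow> 'o \<Rightarrow> 'o \<Rightarrow> 'o \<Rightarrow>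
    'm \<Rightarrow> 'm \<Rightarrow> 'm \<Rightarrow> 'm \<Rightarrow> bool" where
  "is_biprod C A B S i1 i2 p1 p2 \<longleftrightarrow>
     A \<in> Ob C \<and> B \<in> Ob C \<and> S \<in> Ob C \<and>
     i1 \<in> Hom C A S \<and> i2 \<in> Hom C B S \<and> p1 \<in> Hom C S A \<and> p2 \<in> Hom C S B \<and>
     cmp C p1 i1 = ident C A \<and> cmp C p2 i2 = ident C B \<and>
     cmp C p1 i2 = zer C B A \<and> cmp C p2 i1 = zer C A B \<and>
     plus C (cmp C i1 p1) (cmp C i2 p2) = ident C S"

definition is_additive :: "('o, 'm, 'x) addcat_scheme \<Rightarrow> bool" where
  "is_additive C \<longleftrightarrow> is_preadditive C \<and> (\<exists>Z. is_zero_obj C Z) \<and>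
     (\<forall>A \<in> Ob C. \<forall>B \<in> Ob C. \<exists>S i1 i2 p1 p2. is_biprod C A B S i1 i2 p1 p2)"

definition is_iso :: "('o, 'm, 'x) addcat_scheme \<Rightarrow> 'o \<Rightarrow> 'o \<Rightarrow> 'm \<Rightarrow> bool" where
  "is_iso C A B f \<longleftrightarrow> f \<in> Hom C A B \<and>
     (\<exists>g \<in> Hom C B A. cmp C g f = ident C A \<and> cmp C f g = ident C B)"

definition is_kernel :: "('o, 'm, 'x) addcat_scheme \<Rightarrow> 'o \<Rightarrow> 'o \<Rightarrow> 'o \<Rightarrow> 'm \<Rightarrow> 'm \<Rightarrow> bool" where
  "is_kernel C A B D i d \<longleftrightarrow> i \<in> Hom C A B \<and> d \<in> Hom C B D \<and> cmp C d i = zer C A D \<and>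
     (\<forall>T \<in> Ob C. \<forall>g \<in> Hom C T B. cmp C d g = zer C T D \<longrightarrow> (\<exists>!h. h \<in> Hom C T A \<and> cmp C i h = g))"

definition is_cokernel :: "('o, 'm, 'x) addcat_scheme \<Rightarrow> 'o \<Rightarrow> 'o \<Rightarrow> 'o \<Rightarrow> 'm \<Rightarrow> 'm \<Rightarrow> bool" where
  "is_cokernel C A B D i d \<longleftrightarrow> i \<in> Hom C A B \<and> d \<in> Hom C B D \<and> cmp C d i = zer C A D \<and>
     (\<forall>T \<in> Ob C. \<forall>g \<in> Hom C B T. cmp C g i = zer C A T \<longrightarrow> (\<exists>!h. h \<in> Hom C D T \<and> cmp C h d = g))"

definition is_kc_pair :: "('o, 'm, 'x) addcat_scheme \<Rightarrow> 'o \<Rightarrow> 'o \<Rightarrow> 'o \<Rightarrow> 'm \<Rightarrow> 'm \<Rightarrow> bool" where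
  "is_kc_pair C A B D i d \<longleftrightarrow> is_kernel C A B D i d \<and> is_cokernel C A B D i d"

definition is_pushout :: "('o, 'm, 'x) addcat_scheme \<Rightarrow> 'o \<Rightarrow> 'o \<Rightarrow> 'o \<Rightarrow> 'o \<Rightarrow>
    'm \<Rightarrow> 'm \<Rightarrow> 'm \<Rightarrow> 'm \<Rightarrow> bool" where
  "is_pushout C A B A' P i f i' f' \<longleftrightarrow>
     i \<in> Hom C A B \<and> f \<in> Hom C A A' \<and> i' \<in> Hom C A' P \<and> f' \<in> Hom C B P \<and>
     cmp C f' i = cmp C i' f \<and>
     (\<forall>T \<in> Ob C. \<forall>u \<in> Hom C A' T. \<forall>v \<in> Hom C B T. cmp C v i = cmp C u f \<longrightarrow>
        (\<exists>!h. h \<in> Hom C P T \<and> cmp C h i' = u \<and> cmp C h f' = v))"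

definition is_pullback :: "('o, 'm, 'x) addcat_scheme \<Rightarrow> 'o \<Rightarrow> 'o \<Rightarrow> 'o \<Rightarrow> 'o \<Rightarrow>
    'm \<Rightarrow> 'm \<Rightarrow> 'm \<Rightarrow> 'm \<Rightarrow> bool" where
  "is_pullback C B D D' P d f d' f' \<longleftrightarrow>
     d \<in> Hom C B D \<and> f \<in> Hom C D' D \<and> d' \<in> Hom C P D' \<and> f' \<in> Hom C P B \<and>
     cmp C d f' = cmp C f d' \<and>
     (\<forall>T \<in> Ob C. \<forall>u \<in> Hom C T D'. \<forall>v \<in> Hom C T B. cmp C d v = cmp C f u \<longrightarrow>
        (\<exists>!h. h \<in> Hom C T P \<and> cmp C d' h = u \<and> cmp C f' h = v))"

text \<open>\<open>E\<close> is a class of pairs \<open>(i, d)\<close> of composable morphisms (conflations).\<close>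

definition adm_monic :: "('o, 'm, 'x) addcat_scheme \<Rightarrow> ('m \<times> 'm) set \<Rightarrow> 'o \<Rightarrow> 'o \<Rightarrow> 'm \<Rightarrow> bool" where
  "adm_monic C E A B i \<longleftrightarrow> i \<in> Hom C A B \<and> (\<exists>d. (i, d) \<in> E)"

definition adm_epic :: "('o, 'm, 'x) addcat_scheme \<Rightarrow> ('m \<times> 'm) set \<Rightarrow> 'o \<Rightarrow> 'o \<Rightarrow> 'm \<Rightarrow> bool" where
  "adm_epic C E B D d \<longleftrightarrow> d \<in> Hom C B D \<and> (\<exists>i. (i, d) \<in> E)"

definition is_exact_cat :: "('o, 'm, 'x) addcat_scheme \<Rightarrow> ('m \<times> 'm) set \<Rightarrow> bool" where
  "is_exact_cat C E \<longleftrightarrow> is_additive C \<and>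
     \<comment> \<open>E consists of kernel-cokernel pairs\<close>
     (\<forall>(i, d) \<in> E. \<exists>A B D. is_kc_pair C A B D i d) \<and>
     \<comment> \<open>E is closed under isomorphisms of kernel-cokernel pairs\<close>
     (\<forall>A B D A' B' D' i d i' d' a b c.
        (i, d) \<in> E \<longrightarrow> i \<in> Hom C A B \<longrightarrow> d \<in> Hom C B D \<longrightarrow>
        i' \<in> Hom C A' B' \<longrightarrow> d' \<in> Hom C B' D' \<longrightarrow>
        is_iso C A A' a \<longrightarrow> is_iso C B B' b \<longrightarrow> is_iso C D D' c \<longrightarrow>
        cmp C b i = cmp C i' a \<longrightarrow> cmp C c d = cmp C d' b \<longrightarrow> (i', d') \<in> E) \<and>
     \<comment> \<open>E0, E0op\<close>
     (\<forall>A \<in> Ob C. adm_monic C E A A (ident C A)) \<and>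
     (\<forall>A \<in> Ob C. adm_epic C E A A (ident C A)) \<and>
     \<comment> \<open>E1, E1op\<close>
     (\<forall>A B D i j. adm_monic C E A B i \<longrightarrow> adm_monic C E B D j \<longrightarrow> adm_monic C E A D (cmp C j i)) \<and>
     (\<forall>A B D d e. adm_epic C E A B d \<longrightarrow> adm_epic C E B D e \<longrightarrow> adm_epic C E A D (cmp C e d)) \<and>
     \<comment> \<open>E2: pushouts of admissible monics exist and are admissible monics\<close>
     (\<forall>A B A' i f. adm_monic C E A B i \<longrightarrow> f \<in> Hom C A A' \<longrightarrow>
        (\<exists>P i' f'. is_pushout C A B A' P i f i' f' \<and> adm_monic C E A' P i')) \<and>
     \<comment> \<open>E2op: pullbacks of admissible epics exist and are admissible epics\<close>
     (\<forall>B D D' d f. adm_epic C E B D d \<longrightarrow> f \<in> Hom C D' D \<longrightarrow>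
        (\<exists>P d' f'. is_pullback C B D D' P d f d' f' \<and> adm_epic C E P D' d'))"

definition subE :: "('o, 'm, 'x) addcat_scheme \<Rightarrow> ('m \<times> 'm) set \<Rightarrow> 'o \<Rightarrow> 'o \<Rightarrow> bool" where
  "subE C E X Y \<longleftrightarrow> (\<exists>i. adm_monic C E X Y i)"

definition psubE :: "('o, 'm, 'x) addcat_scheme \<Rightarrow> ('m \<times> 'm) set \<Rightarrow> 'o \<Rightarrow> 'o \<Rightarrow> bool" where
  "psubE C E X Y \<longleftrightarrow> (\<exists>i. adm_monic C E X Y i \<and> \<not> is_iso C X Y i)"

definition lenE :: "('o, 'm, 'x) addcat_scheme \<Rightarrow> ('m \<times> 'm) set \<Rightarrow> 'o \<Rightarrow> enat" where
  "lenE C E X = Sup {enat n | n. \<exists>xs. length xs = Suc n \<and> set xs \<subseteq> Ob C \<and>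
       is_zero_obj C (xs ! 0) \<and> xs ! n = X \<and> (\<forall>k < n. psubE C E (xs ! k) (xs ! Suc k))}"

definition finite_exact :: "('o, 'm, 'x) addcat_scheme \<Rightarrow> ('m \<times> 'm) set \<Rightarrow> bool" where
  "finite_exact C E \<longleftrightarrow> (\<forall>X \<in> Ob C. lenE C E X < \<infinity>)"

definition indec :: "('o, 'm, 'x) addcat_scheme \<Rightarrow> 'o \<Rightarrow> bool" where
  "indec C X \<longleftrightarrow> X \<in> Ob C \<and> \<not> is_zero_obj C X \<and>
     (\<forall>A B i1 i2 p1 p2. is_biprod C A B X i1 i2 p1 p2 \<longrightarrow> is_zero_obj C A \<or> is_zero_obj C B)"

definition lll :: "nat list \<Rightarrow> nat list \<Rightarrow> bool" where
  "lll x y \<longleftrightarrow> x = y \<or> (length x < length y \<and> take (length x) y = x) \<or>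
     (\<exists>i < min (length x) (length y). take i x = take i y \<and> x ! i > y ! i)"

definition mu_vecs :: "('o, 'm, 'x) addcat_scheme \<Rightarrow> ('m \<times> 'm) set \<Rightarrow> 'o \<Rightarrow> nat list set" where
  "mu_vecs C E X = {map (\<lambda>Y. the_enat (lenE C E Y)) ys | ys.
       ys \<noteq> [] \<and> last ys = X \<and> (\<forall>Y \<in> set ys. indec C Y) \<and>
       (\<forall>k. Suc k < length ys \<longrightarrow> psubE C E (ys ! k) (ys ! Suc k))}"

definition muE :: "('o, 'm, 'x) addcat_scheme \<Rightarrow> ('m \<times> 'm) set \<Rightarrow> 'o \<Rightarrow> nat list" where
  "muE C E X = (THE v. v \<in> mu_vecs C E X \<and> (\<forall>w \<in> mu_vecs C E X. lll w v))"

end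

theory Submission
  imports Defs
begin


definition Rgt :: "(nat \<times> nat) set" where "Rgt = {(a,b). b < a}"

lemma lll_lex: "lll x y \<longleftrightarrow> x = y \<or> (x,y) \<in> lexord Rgt"
  unfolding lll_def lexord_take_index_conv Rgt_def by auto

lemma lll_refl: "lll x x" by (simp add: lll_def)

lemma trans_Rgt: "trans Rgt" unfolding Rgt_def trans_def by auto

lemma lll_trans: "lll x y \<Longrightarrow> lll y z \<Longrightarrow> lll x z"
  unfolding lll_lex using lexord_trans[OF _ _ trans_Rgt] by blast

lemma lll_total: "lll x y \<or> lll y x"
proof -
  have "total Rgt" unfolding Rgt_def total_on_def by auto
  then have "total (lexord Rgt)" by (rule total_lexord)
  then show ?thesis unfolding lll_lex total_on_def by blast
qed

lemma lll_antisym: "lll x y \<Longrightarrow> lll y x \<Longrightarrow> x = y"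
proof (rule ccontr)
  assume a: "lll x y" "lll y x" "x \<noteq> y"
  then have "(x,y) \<in> lexord Rgt" "(y,x) \<in> lexord Rgt" unfolding lll_lex by auto
  then have "(x,x) \<in> lexord Rgt" using lexord_trans[OF _ _ trans_Rgt] by blast
  moreover have "(x,x) \<notin> lexord Rgt" by (rule lexord_irreflexive) (simp add: Rgt_def)
  ultimately show False by blast
qed

lemma lll_prefix: "lll x (x @ [a])"
  unfolding lll_def by auto

lemma lll_last: "b \<le> a \<Longrightarrow> lll (xs @ [a]) (xs @ [b])"
proof (cases "a = b")
  case False
  assume "b \<le> a"
  then have "b < a" using False by simp
  then show ?thesis unfolding lll_def
    by (intro disjI2 exI[of _ "length xs"]) (auto simp: nth_append)
qed (simp add: lll_refl)

lemma lll_max_exists: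
  assumes "finite S" "S \<noteq> {}"
  shows "\<exists>v \<in> S. \<forall>w \<in> S. lll w v"
  using assms
proof (induction S rule: finite_ne_induct)
  case (singleton x) then show ?case by (simp add: lll_refl)
next
  case (insert x F)
  then obtain m where m: "m \<in> F" "\<forall>w\<in>F. lll w m" by blast
  show ?case
  proof (cases "lll m x")
    case True then show ?thesis using m lll_trans lll_refl by blast
  next
    case False then have "lll x m" using lll_total by blast
    then show ?thesis using m by blast
  qed
qed

lemma lll_THE:
  assumes "finite S" "S \<noteq> {}"
  shows "(THE v. v \<in> S \<and> (\<forall>w \<in> S. lll w v)) \<in> S \<and> (\<forall>w \<in> S. lll w (THE v. v \<in> S \<and> (\<forall>w \<in> S. lll w v)))"
proof -
  obtain v where v: "v \<in> S" "\<forall>w \<in> S. lll w v" using lll_max_exists[OF assms] by blast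
  have "(THE v. v \<in> S \<and> (\<forall>w \<in> S. lll w v)) = v"
    by (rule the_equality) (use v lll_antisym in blast)+
  then show ?thesis using v by simp
qed




lemma catD:
  assumes "is_category C"
  shows hom_ob: "\<And>f A B. f \<in> Hom C A B \<Longrightarrow> A \<in> Ob C \<and> B \<in> Ob C"
    and hom_uniq: "\<And>f A B A' B'. f \<in> Hom C A B \<Longrightarrow> f \<in> Hom C A' B' \<Longrightarrow> A = A' \<and> B = B'"
    and id_hom: "\<And>A. A \<in> Ob C \<Longrightarrow> ident C A \<in> Hom C A A"
    and cmp_hom: "\<And>f g A B D. f \<in> Hom C A B \<Longrightarrow> g \<in> Hom C B D \<Longrightarrow> cmp C g f \<in> Hom C A D"
    and assoc: "\<And>f g h A B D E. f \<in> Hom C A B \<Longrightarrow> g \<in> Hom C B D \<Longrightarrow> h \<in> Hom C D E \<Longrightarrow>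
        cmp C h (cmp C g f) = cmp C (cmp C h g) f"
    and id_r: "\<And>f A B. f \<in> Hom C A B \<Longrightarrow> cmp C f (ident C A) = f"
    and id_l: "\<And>f A B. f \<in> Hom C A B \<Longrightarrow> cmp C (ident C B) f = f"
  using assms unfolding is_category_def by (auto 0 0) (blast+)

lemma exD:
  assumes "is_exact_cat C E"
  shows "is_category C" and "is_preadditive C"
proof -
  show P: "is_preadditive C"
    using assms[unfolded is_exact_cat_def, THEN conjunct1, unfolded is_additive_def, THEN conjunct1] .
  show "is_category C" using P[unfolded is_preadditive_def, THEN conjunct1] .
qed

lemma ex_kc:
  assumes "is_exact_cat C E" "(i, d) \<in> E"
  shows "\<exists>A B D. is_kc_pair C A B D i d"
proof -
  have "\<forall>(i, d)\<in>E. \<exists>A B D. is_kc_pair C A B D i d"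
    using assms(1)[unfolded is_exact_cat_def, THEN conjunct2, THEN conjunct1] .
  then show ?thesis using assms(2) by blast
qed

lemma zero_law_l:
  assumes P: "is_preadditive C" and f: "f \<in> Hom C A B" and D: "D \<in> Ob C"
  shows "cmp C (zer C B D) f = zer C A D"
proof -
  have cat: "is_category C" using P unfolding is_preadditive_def by auto
  have AB: "A \<in> Ob C" "B \<in> Ob C" using hom_ob[OF cat f] by auto
  note pa = P[unfolded is_preadditive_def, THEN conjunct2, THEN conjunct1, rule_format]
  note dl = P[unfolded is_preadditive_def, THEN conjunct2, THEN conjunct2, THEN conjunct1, rule_format]
  let ?z = "zer C B D"
  have z: "?z \<in> Hom C B D" using pa[OF AB(2) D] by auto
  have zz: "plus C ?z ?z = ?z" using pa[OF AB(2) D] by auto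
  let ?w = "cmp C ?z f"
  have w: "?w \<in> Hom C A D" using cmp_hom[OF cat f z] .
  have ww: "plus C ?w ?w = ?w" using dl[OF f z z] zz by simp
  have "zer C A D = plus C ?w (neg C ?w)" using pa[OF AB(1) D] w by auto
  also have "\<dots> = plus C (plus C ?w ?w) (neg C ?w)" using ww by simp
  also have "\<dots> = plus C ?w (plus C ?w (neg C ?w))" using pa[OF AB(1) D] w by auto
  also have "\<dots> = ?w" using pa[OF AB(1) D] w by auto
  finally show ?thesis by simp
qed

lemma zero_law_r:
  assumes P: "is_preadditive C" and f: "f \<in> Hom C B D" and A: "A \<in> Ob C"
  shows "cmp C f (zer C A B) = zer C A D"
proof -
  have cat: "is_category C" using P unfolding is_preadditive_def by auto
  have BD: "B \<in> Ob C" "D \<in> Ob C" using hom_ob[OF cat f] by auto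
  note pa = P[unfolded is_preadditive_def, THEN conjunct2, THEN conjunct1, rule_format]
  note dr = P[unfolded is_preadditive_def, THEN conjunct2, THEN conjunct2, THEN conjunct2, rule_format]
  let ?z = "zer C A B"
  have z: "?z \<in> Hom C A B" using pa[OF A BD(1)] by auto
  have zz: "plus C ?z ?z = ?z" using pa[OF A BD(1)] by auto
  let ?w = "cmp C f ?z"
  have w: "?w \<in> Hom C A D" using cmp_hom[OF cat z f] .
  have ww: "plus C ?w ?w = ?w" using dr[OF z z f] zz by simp
  have "zer C A D = plus C ?w (neg C ?w)" using pa[OF A BD(2)] w by auto
  also have "\<dots> = plus C (plus C ?w ?w) (neg C ?w)" using ww by simp
  also have "\<dots> = plus C ?w (plus C ?w (neg C ?w))" using pa[OF A BD(2)] w by auto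
  also have "\<dots> = ?w" using pa[OF A BD(2)] w by auto
  finally show ?thesis by simp
qed

lemma zer_hom: "is_preadditive C \<Longrightarrow> A \<in> Ob C \<Longrightarrow> B \<in> Ob C \<Longrightarrow> zer C A B \<in> Hom C A B"
  unfolding is_preadditive_def by blast

lemma id_zero_imp_zero:
  assumes P: "is_preadditive C" and X: "X \<in> Ob C" and e: "ident C X = zer C X X"
  shows "is_zero_obj C X"
proof -
  have cat: "is_category C" using P unfolding is_preadditive_def by auto
  have "Hom C X T = {zer C X T} \<and> Hom C T X = {zer C T X}" if T: "T \<in> Ob C" for T
  proof -
    have "f = zer C X T" if f: "f \<in> Hom C X T" for f
      using id_r[OF cat f] zero_law_r[OF P f X] e by simp
    moreover have "f = zer C T X" if f: "f \<in> Hom C T X" for f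
      using id_l[OF cat f] zero_law_l[OF P f X] e by simp
    ultimately show ?thesis using zer_hom[OF P X T] zer_hom[OF P T X] by blast
  qed
  then show ?thesis unfolding is_zero_obj_def using X by blast
qed

lemma iso_inv:
  assumes cat: "is_category C" and "is_iso C A B f"
  obtains g where "g \<in> Hom C B A" "cmp C g f = ident C A" "cmp C f g = ident C B" "is_iso C B A g"
  using assms unfolding is_iso_def by blast

lemma iso_adm:
  assumes Ex: "is_exact_cat C E" and iso: "is_iso C A B f"
  shows "adm_monic C E A B f"
proof -
  have cat: "is_category C" using exD[OF Ex] by auto
  have f: "f \<in> Hom C A B" using iso unfolding is_iso_def by auto
  obtain g where g: "g \<in> Hom C B A" "cmp C g f = ident C A" "cmp C f g = ident C B"
    using iso_inv[OF cat iso] by blast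
  have A: "A \<in> Ob C" using hom_ob[OF cat f] by auto
  have "adm_monic C E A A (ident C A)"
    using Ex[unfolded is_exact_cat_def, THEN conjunct2, THEN conjunct2, THEN conjunct2, THEN conjunct1, rule_format, OF A] .
  then obtain d where d: "(ident C A, d) \<in> E" unfolding adm_monic_def by blast
  then obtain A0 B0 D0 where kc: "is_kc_pair C A0 B0 D0 (ident C A) d"
    using ex_kc[OF Ex] by blast
  have iA: "ident C A \<in> Hom C A A" using id_hom[OF cat A] .
  have h0: "ident C A \<in> Hom C A0 B0" "d \<in> Hom C B0 D0"
    using kc unfolding is_kc_pair_def is_kernel_def by auto
  have "B0 = A" using hom_uniq[OF cat h0(1) iA] by simp
  then have dh: "d \<in> Hom C A D0" using h0 by simp
  have D0: "D0 \<in> Ob C" using hom_ob[OF cat dh] by simp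
  have iD: "ident C D0 \<in> Hom C D0 D0" using id_hom[OF cat D0] .
  have isoA: "is_iso C A A (ident C A)" unfolding is_iso_def using iA id_l[OF cat iA] by blast
  have isoD: "is_iso C D0 D0 (ident C D0)" unfolding is_iso_def using iD id_l[OF cat iD] by blast
  have dg: "cmp C d g \<in> Hom C B D0" using cmp_hom[OF cat g(1) dh] .
  have e1: "cmp C f (ident C A) = cmp C f (ident C A)" by simp
  have e2: "cmp C (ident C D0) d = cmp C (cmp C d g) f"
    using id_l[OF cat dh] assoc[OF cat f g(1) dh] g(2) id_r[OF cat dh] by simp
  have rule: "\<forall>A B D A' B' D' i d i' d' a b c.
        (i, d) \<in> E \<longrightarrow> i \<in> Hom C A B \<longrightarrow> d \<in> Hom C B D \<longrightarrow>
        i' \<in> Hom C A' B' \<longrightarrow> d' \<in> Hom C B' D' \<longrightarrow>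
        is_iso C A A' a \<longrightarrow> is_iso C B B' b \<longrightarrow> is_iso C D D' c \<longrightarrow>
        cmp C b i = cmp C i' a \<longrightarrow> cmp C c d = cmp C d' b \<longrightarrow> (i', d') \<in> E"
    using Ex[unfolded is_exact_cat_def, THEN conjunct2, THEN conjunct2, THEN conjunct1] .
  have "(f, cmp C d g) \<in> E"
    using rule[rule_format, OF d iA dh f dg isoA iso isoD e1 e2] .
  then show ?thesis unfolding adm_monic_def using f by blast
qed

lemma psub_iso:
  assumes Ex: "is_exact_cat C E" and p: "psubE C E X Y" and iso: "is_iso C Y Y' g"
  shows "psubE C E X Y'"
proof -
  have cat: "is_category C" using exD[OF Ex] by auto
  obtain i where i: "adm_monic C E X Y i" "\<not> is_iso C X Y i" using p unfolding psubE_def by blast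
  have ih: "i \<in> Hom C X Y" using i unfolding adm_monic_def by auto
  have gh: "g \<in> Hom C Y Y'" using iso unfolding is_iso_def by auto
  obtain gi where gi: "gi \<in> Hom C Y' Y" "cmp C gi g = ident C Y" "cmp C g gi = ident C Y'"
    using iso_inv[OF cat iso] by blast
  have E1: "\<forall>A B D i j. adm_monic C E A B i \<longrightarrow> adm_monic C E B D j \<longrightarrow> adm_monic C E A D (cmp C j i)"
    using Ex[unfolded is_exact_cat_def, THEN conjunct2, THEN conjunct2, THEN conjunct2, THEN conjunct2, THEN conjunct2, THEN conjunct1] .
  have am: "adm_monic C E X Y' (cmp C g i)" using E1 i(1) iso_adm[OF Ex iso] by blast
  have "\<not> is_iso C X Y' (cmp C g i)"
  proof
    assume "is_iso C X Y' (cmp C g i)"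
    then obtain h where h: "h \<in> Hom C Y' X" "cmp C h (cmp C g i) = ident C X" "cmp C (cmp C g i) h = ident C Y'"
      unfolding is_iso_def by blast
    have hg: "cmp C h g \<in> Hom C Y X" using cmp_hom[OF cat gh h(1)] .
    have l: "cmp C (cmp C h g) i = ident C X" using h(2) assoc[OF cat ih gh h(1)] by simp
    have "cmp C i (cmp C h g) = cmp C (cmp C gi g) (cmp C i (cmp C h g))"
      using gi(2) id_l[OF cat cmp_hom[OF cat hg ih]] by simp
    also have "\<dots> = cmp C gi (cmp C g (cmp C i (cmp C h g)))"
      using assoc[OF cat cmp_hom[OF cat hg ih] gh gi(1)] by simp
    also have "cmp C g (cmp C i (cmp C h g)) = cmp C (cmp C (cmp C g i) h) g"
      using assoc[OF cat hg ih gh] assoc[OF cat gh h(1) cmp_hom[OF cat ih gh]] by simp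
    also have "\<dots> = g" using h(3) id_l[OF cat gh] by simp
    finally have r: "cmp C i (cmp C h g) = ident C Y" using gi(2) by simp
    have "is_iso C X Y i" unfolding is_iso_def using ih hg l r by blast
    then show False using i(2) by simp
  qed
  then show ?thesis unfolding psubE_def using am by blast
qed

lemma zero_psub:
  assumes Ex: "is_exact_cat C E" and X: "X \<in> Ob C" and nz: "\<not> is_zero_obj C X"
  shows "\<exists>Z. is_zero_obj C Z \<and> psubE C E Z X"
proof -
  have cat: "is_category C" and P: "is_preadditive C" using exD[OF Ex] by auto
  have "adm_epic C E X X (ident C X)"
    using Ex[unfolded is_exact_cat_def, THEN conjunct2, THEN conjunct2, THEN conjunct2, THEN conjunct2, THEN conjunct1, rule_format, OF X] .
  then obtain i where iE: "(i, ident C X) \<in> E" unfolding adm_epic_def by blast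
  then obtain A B D where kc: "is_kc_pair C A B D i (ident C X)"
    using ex_kc[OF Ex] by blast
  have iX: "ident C X \<in> Hom C X X" using id_hom[OF cat X] .
  have k: "is_kernel C A B D i (ident C X)" using kc unfolding is_kc_pair_def by simp
  have h0: "i \<in> Hom C A B" "ident C X \<in> Hom C B D" "cmp C (ident C X) i = zer C A D"
    using k unfolding is_kernel_def by auto
  have "B = X" "D = X" using hom_uniq[OF cat h0(2) iX] by auto
  note h0 = h0[unfolded this]
  note k = k[unfolded \<open>B = X\<close> \<open>D = X\<close>]
  have A: "A \<in> Ob C" using hom_ob[OF cat h0(1)] by simp
  have ieq: "i = zer C A X" using h0(3) id_l[OF cat h0(1)] by simp
  have homT: "Hom C T A = {zer C T A}" if T: "T \<in> Ob C" for T
  proof -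
    have g: "zer C T X \<in> Hom C T X" using zer_hom[OF P T X] .
    have "cmp C (ident C X) (zer C T X) = zer C T X" using id_l[OF cat g] .
    then have "\<exists>!h. h \<in> Hom C T A \<and> cmp C i h = zer C T X"
      using k T g unfolding is_kernel_def by blast
    moreover have "cmp C i h = zer C T X" if "h \<in> Hom C T A" for h
      using zero_law_l[OF P that X] ieq by simp
    ultimately show ?thesis using zer_hom[OF P T A] by blast
  qed
  have idA: "ident C A = zer C A A" using homT[OF A] id_hom[OF cat A] by blast
  have ZA: "is_zero_obj C A" using id_zero_imp_zero[OF P A idA] .
  have am: "adm_monic C E A X i" unfolding adm_monic_def using h0(1) iE by blast
  have "\<not> is_iso C A X i"
  proof
    assume "is_iso C A X i"
    then obtain g where g: "g \<in> Hom C X A" "cmp C i g = ident C X" unfolding is_iso_def by blast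
    have "ident C X = zer C X X" using g zero_law_l[OF P g(1) X] ieq by simp
    then show False using id_zero_imp_zero[OF P X] nz by simp
  qed
  then show ?thesis using ZA am unfolding psubE_def by blast
qed




lemma len_step:
  assumes Ex: "is_exact_cat C E" and X: "X \<in> Ob C" and nz: "\<not> is_zero_obj C X"
    and Y: "Y \<in> Ob C" and p: "psubE C E X Y"
  shows "eSuc (lenE C E X) \<le> lenE C E Y"
proof -
  define SX where "SX = {enat n | n. \<exists>xs. length xs = Suc n \<and> set xs \<subseteq> Ob C \<and>
       is_zero_obj C (xs ! 0) \<and> xs ! n = X \<and> (\<forall>k < n. psubE C E (xs ! k) (xs ! Suc k))}"
  obtain Z where Z: "is_zero_obj C Z" "psubE C E Z X" using zero_psub[OF Ex X nz] by blast
  have ZO: "Z \<in> Ob C" using Z(1) unfolding is_zero_obj_def by simp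
  have "enat 1 \<in> SX" unfolding SX_def
    by (rule CollectI, rule exI[of _ 1], simp, rule exI[of _ "[Z, X]"]) (use Z ZO X in \<open>auto simp: less_Suc_eq\<close>)
  then have ne: "SX \<noteq> {}" by blast
  have "eSuc a \<le> lenE C E Y" if a: "a \<in> SX" for a
  proof -
    obtain n xs where nx: "a = enat n" "length xs = Suc n" "set xs \<subseteq> Ob C"
       "is_zero_obj C (xs ! 0)" "xs ! n = X" "\<forall>k < n. psubE C E (xs ! k) (xs ! Suc k)"
      using a unfolding SX_def by blast
    let ?ys = "xs @ [Y]"
    have "\<forall>k < Suc n. psubE C E (?ys ! k) (?ys ! Suc k)"
    proof (intro allI impI)
      fix k assume k: "k < Suc n"
      show "psubE C E (?ys ! k) (?ys ! Suc k)"
      proof (cases "k = n")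
        case True then show ?thesis using nx p by (simp add: nth_append)
      next
        case False then have "k < n" using k by simp
        then show ?thesis using nx by (simp add: nth_append)
      qed
    qed
    moreover have "?ys ! 0 = xs ! 0" using nx(2) by (simp add: nth_append)
    ultimately have "enat (Suc n) \<in> {enat n | n. \<exists>xs. length xs = Suc n \<and> set xs \<subseteq> Ob C \<and>
       is_zero_obj C (xs ! 0) \<and> xs ! n = Y \<and> (\<forall>k < n. psubE C E (xs ! k) (xs ! Suc k))}"
      using nx Y by (intro CollectI exI[of _ "Suc n"]) (auto intro!: exI[of _ ?ys] simp: nth_append)
    then have "enat (Suc n) \<le> lenE C E Y" unfolding lenE_def by (rule Sup_upper)
    then show ?thesis using nx(1) by (simp add: eSuc_enat)
  qed
  then have "Sup (eSuc ` SX) \<le> lenE C E Y" by (auto intro: Sup_least)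
  then show ?thesis unfolding lenE_def using eSuc_Sup[OF ne] SX_def lenE_def by (simp add: SX_def)
qed

lemma len_less:
  assumes Ex: "is_exact_cat C E" and F: "finite_exact C E" and X: "X \<in> Ob C" and nz: "\<not> is_zero_obj C X"
    and Y: "Y \<in> Ob C" and p: "psubE C E X Y"
  shows "the_enat (lenE C E X) < the_enat (lenE C E Y)"
proof -
  have fx: "lenE C E X < \<infinity>" "lenE C E Y < \<infinity>" using F X Y unfolding finite_exact_def by auto
  have le: "eSuc (lenE C E X) \<le> lenE C E Y" using len_step[OF Ex X nz Y p] .
  from fx obtain a b where "lenE C E X = enat a" "lenE C E Y = enat b" by (cases "lenE C E X"; cases "lenE C E Y") auto
  then show ?thesis using le by (simp add: eSuc_enat)
qed




lemma len_iso_le: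
  assumes Ex: "is_exact_cat C E" and X: "X \<in> Ob C" and nz: "\<not> is_zero_obj C Y"
    and iso: "is_iso C Y X g"
  shows "lenE C E Y \<le> lenE C E X"
  unfolding lenE_def
proof (rule Sup_subset_mono, rule subsetI)
  fix a assume "a \<in> {enat n | n. \<exists>xs. length xs = Suc n \<and> set xs \<subseteq> Ob C \<and>
       is_zero_obj C (xs ! 0) \<and> xs ! n = Y \<and> (\<forall>k < n. psubE C E (xs ! k) (xs ! Suc k))}"
  then obtain n xs where nx: "a = enat n" "length xs = Suc n" "set xs \<subseteq> Ob C"
       "is_zero_obj C (xs ! 0)" "xs ! n = Y" "\<forall>k < n. psubE C E (xs ! k) (xs ! Suc k)"
    by blast
  have n0: "n \<noteq> 0" using nx(4,5) nz by (cases n) auto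
  let ?ys = "xs[n := X]"
  have ch: "\<forall>k < n. psubE C E (?ys ! k) (?ys ! Suc k)"
  proof (intro allI impI)
    fix k assume k: "k < n"
    show "psubE C E (?ys ! k) (?ys ! Suc k)"
    proof (cases "Suc k = n")
      case True
      have "psubE C E (xs ! k) X" using psub_iso[OF Ex _ iso] nx(5,6) k True by metis
      then show ?thesis using True nx(2) by simp
    next
      case False then show ?thesis using nx k by simp
    qed
  qed
  have "set ?ys \<subseteq> Ob C" using nx(3) X by (metis insert_subset set_update_subset_insert subset_trans)
  moreover have "?ys ! 0 = xs ! 0" using n0 by simp
  ultimately show "a \<in> {enat n | n. \<exists>xs. length xs = Suc n \<and> set xs \<subseteq> Ob C \<and>
       is_zero_obj C (xs ! 0) \<and> xs ! n = X \<and> (\<forall>k < n. psubE C E (xs ! k) (xs ! Suc k))}"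
    using nx ch by (intro CollectI exI[of _ n]) (auto intro!: exI[of _ ?ys])
qed

lemma indecD: "indec C X \<Longrightarrow> X \<in> Ob C \<and> \<not> is_zero_obj C X"
  unfolding indec_def by auto

lemma chain_less:
  assumes Ex: "is_exact_cat C E" and F: "finite_exact C E"
    and ind: "\<forall>Y \<in> set ys. indec C Y"
    and ch: "\<forall>k. Suc k < length ys \<longrightarrow> psubE C E (ys ! k) (ys ! Suc k)"
  shows "i < j \<Longrightarrow> j < length ys \<Longrightarrow> the_enat (lenE C E (ys ! i)) < the_enat (lenE C E (ys ! j))"
proof (induction j)
  case 0 then show ?case by simp
next
  case (Suc j)
  have a: "indec C (ys ! j)" "indec C (ys ! Suc j)" using ind Suc.prems by auto
  have s: "the_enat (lenE C E (ys ! j)) < the_enat (lenE C E (ys ! Suc j))"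
    using len_less[OF Ex F _ _ _ ch[rule_format, OF Suc.prems(2)]] indecD[OF a(1)] indecD[OF a(2)] by blast
  show ?case
  proof (cases "i = j")
    case True then show ?thesis using s by simp
  next
    case False then show ?thesis using Suc s by simp
  qed
qed

lemma mu_vecs_finite:
  assumes Ex: "is_exact_cat C E" and F: "finite_exact C E"
  shows "finite (mu_vecs C E X)"
proof -
  define N where "N = the_enat (lenE C E X)"
  have "mu_vecs C E X \<subseteq> {xs. set xs \<subseteq> {..N} \<and> length xs \<le> Suc N}"
  proof
    fix v assume "v \<in> mu_vecs C E X"
    then obtain ys where ys: "v = map (\<lambda>Y. the_enat (lenE C E Y)) ys" "ys \<noteq> []" "last ys = X"
      "\<forall>Y \<in> set ys. indec C Y" "\<forall>k. Suc k < length ys \<longrightarrow> psubE C E (ys ! k) (ys ! Suc k)"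
      unfolding mu_vecs_def by blast
    note cl = chain_less[OF Ex F ys(4) ys(5)]
    have sw: "sorted_wrt (<) v" unfolding sorted_wrt_iff_nth_less using cl ys(1) by auto
    have lastv: "ys ! (length ys - 1) = X" using ys(2,3) by (simp add: last_conv_nth)
    have "v ! i \<le> N" if "i < length v" for i
    proof (cases "i = length ys - 1")
      case True then show ?thesis using lastv ys(1) that N_def by simp
    next
      case False then have "i < length ys - 1" using that ys(1) by simp
      then show ?thesis using cl[of i "length ys - 1"] lastv ys(1) ys(2) N_def by (simp add: less_imp_le)
    qed
    then have st: "set v \<subseteq> {..N}" by (auto simp: in_set_conv_nth)
    have "distinct v" using sw strict_sorted_iff by blast
    then have "length v = card (set v)" by (simp add: distinct_card)
    also have "\<dots> \<le> card {..N}" using st by (intro card_mono) auto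
    finally show "v \<in> {xs. set xs \<subseteq> {..N} \<and> length xs \<le> Suc N}" using st by simp
  qed
  then show ?thesis using finite_lists_length_le[of "{..N}" "Suc N"] finite_subset by blast
qed

lemma muE_prop:
  assumes Ex: "is_exact_cat C E" and F: "finite_exact C E" and X: "indec C X"
  shows "muE C E X \<in> mu_vecs C E X \<and> (\<forall>w \<in> mu_vecs C E X. lll w (muE C E X))"
proof -
  have "[the_enat (lenE C E X)] \<in> mu_vecs C E X" unfolding mu_vecs_def using X
    by (intro CollectI exI[of _ "[X]"]) auto
  then have "mu_vecs C E X \<noteq> {}" by blast
  then show ?thesis unfolding muE_def using lll_THE[OF mu_vecs_finite[OF Ex F]] by blast
qed




lemma part2:
  assumes Ex: "is_exact_cat C E" and F: "finite_exact C E" and X: "indec C X" and Y: "indec C Y"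
    and p: "psubE C E X Y"
  shows "lll (muE C E X) (muE C E Y) \<and> muE C E X \<noteq> muE C E Y"
proof -
  let ?L = "\<lambda>Y. the_enat (lenE C E Y)"
  have mx: "muE C E X \<in> mu_vecs C E X" using muE_prop[OF Ex F X] by blast
  have my: "\<forall>w \<in> mu_vecs C E Y. lll w (muE C E Y)" using muE_prop[OF Ex F Y] by blast
  obtain ys where ys: "muE C E X = map ?L ys" "ys \<noteq> []" "last ys = X"
      "\<forall>Y \<in> set ys. indec C Y" "\<forall>k. Suc k < length ys \<longrightarrow> psubE C E (ys ! k) (ys ! Suc k)"
    using mx unfolding mu_vecs_def by blast
  let ?ys = "ys @ [Y]"
  have ch: "\<forall>k. Suc k < length ?ys \<longrightarrow> psubE C E (?ys ! k) (?ys ! Suc k)"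
  proof (intro allI impI)
    fix k assume k: "Suc k < length ?ys"
    show "psubE C E (?ys ! k) (?ys ! Suc k)"
    proof (cases "Suc k = length ys")
      case True
      then have "ys ! k = X" using ys(3) last_conv_nth[OF ys(2)] by (simp add: True[symmetric])
      then show ?thesis using True p by (simp add: nth_append)
    next
      case False then have "Suc k < length ys" using k by simp
      then show ?thesis using ys(5) by (simp add: nth_append)
    qed
  qed
  have "map ?L ?ys \<in> mu_vecs C E Y" unfolding mu_vecs_def using ys(4) Y ch
    by (intro CollectI exI[of _ ?ys]) auto
  then have l2: "lll (muE C E X @ [?L Y]) (muE C E Y)" using my ys(1) by simp
  have l1: "lll (muE C E X) (muE C E X @ [?L Y])" by (rule lll_prefix)
  have "muE C E X \<noteq> muE C E Y"
  proof
    assume "muE C E X = muE C E Y"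
    then have "muE C E X @ [?L Y] = muE C E X" using l1 l2 lll_antisym by metis
    then show False by simp
  qed
  then show ?thesis using lll_trans[OF l1 l2] by blast
qed

theorem lemma7p4:
  fixes C :: "('o, 'm) addcat" and E :: "('m \<times> 'm) set"
  assumes "is_exact_cat C E" and "finite_exact C E"
  shows "(\<forall>X Y. indec C X \<longrightarrow> indec C Y \<longrightarrow> subE C E X Y \<longrightarrow> lll (muE C E X) (muE C E Y)) \<and>
         (\<forall>X Y. indec C X \<longrightarrow> indec C Y \<longrightarrow> psubE C E X Y \<longrightarrow>
           lll (muE C E X) (muE C E Y) \<and> muE C E X \<noteq> muE C E Y)"
proof (intro conjI allI impI)
  note Ex = assms(1) and F = assms(2)
  fix X Y assume X: "indec C X" and Y: "indec C Y" and p: "psubE C E X Y"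
  show "lll (muE C E X) (muE C E Y)" "muE C E X \<noteq> muE C E Y" using part2[OF Ex F X Y p] by auto
next
  note Ex = assms(1) and F = assms(2)
  have cat: "is_category C" using exD[OF Ex] by auto
  fix X Y assume X: "indec C X" and Y: "indec C Y" and s: "subE C E X Y"
  obtain i where i: "adm_monic C E X Y i" using s unfolding subE_def by blast
  show "lll (muE C E X) (muE C E Y)"
  proof (cases "is_iso C X Y i")
    case False
    then have "psubE C E X Y" using i unfolding psubE_def by blast
    then show ?thesis using part2[OF Ex F X Y] by blast
  next
    case iso: True
    let ?L = "\<lambda>Y. the_enat (lenE C E Y)"
    obtain g where g: "is_iso C Y X g" using iso_inv[OF cat iso] by blast
    have "lenE C E Y \<le> lenE C E X" using len_iso_le[OF Ex _ _ g] indecD[OF X] indecD[OF Y] by blast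
    moreover have "lenE C E X < \<infinity>" "lenE C E Y < \<infinity>"
      using F indecD[OF X] indecD[OF Y] unfolding finite_exact_def by auto
    ultimately have LL: "?L Y \<le> ?L X" by (cases "lenE C E X"; cases "lenE C E Y") auto
    have mx: "muE C E X \<in> mu_vecs C E X" using muE_prop[OF Ex F X] by blast
    have my: "\<forall>w \<in> mu_vecs C E Y. lll w (muE C E Y)" using muE_prop[OF Ex F Y] by blast
    obtain ys where ys: "muE C E X = map ?L ys" "ys \<noteq> []" "last ys = X"
        "\<forall>Y \<in> set ys. indec C Y" "\<forall>k. Suc k < length ys \<longrightarrow> psubE C E (ys ! k) (ys ! Suc k)"
      using mx unfolding mu_vecs_def by blast
    have ysd: "ys = butlast ys @ [X]" using append_butlast_last_id[OF ys(2)] ys(3) by simp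
    let ?ys = "butlast ys @ [Y]"
    have ch: "\<forall>k. Suc k < length ?ys \<longrightarrow> psubE C E (?ys ! k) (?ys ! Suc k)"
    proof (intro allI impI)
      fix k assume k: "Suc k < length ?ys"
      have pk: "psubE C E (ys ! k) (ys ! Suc k)" using ys(5) k ys(2) by simp
      have kb: "k < length (butlast ys)" using k by simp
      have yk: "ys ! k = butlast ys ! k" using kb by (simp add: nth_butlast)
      show "psubE C E (?ys ! k) (?ys ! Suc k)"
      proof (cases "Suc k = length (butlast ys)")
        case True
        have "length ys = Suc (Suc k)" using True ys(2) by simp
        then have "ys ! Suc k = X" using ys(3) last_conv_nth[OF ys(2)] by simp
        then have "psubE C E (ys ! k) Y" using psub_iso[OF Ex _ iso] pk by simp
        then show ?thesis using True kb yk by (simp add: nth_append)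
      next
        case False then have "Suc k < length (butlast ys)" using k by simp
        then show ?thesis using pk kb by (simp add: nth_append nth_butlast)
      qed
    qed
    have "\<forall>Z \<in> set ?ys. indec C Z" using ys(4) Y by (auto dest: in_set_butlastD)
    then have "map ?L ?ys \<in> mu_vecs C E Y" unfolding mu_vecs_def using ch
      by (intro CollectI exI[of _ ?ys]) auto
    then have l2: "lll (map ?L (butlast ys) @ [?L Y]) (muE C E Y)" using my by simp
    have "muE C E X = map ?L (butlast ys) @ [?L X]" using ys(1) arg_cong[OF ysd, of "map ?L"] by simp
    then have l1: "lll (muE C E X) (map ?L (butlast ys) @ [?L Y])" using lll_last[OF LL] by simp
    show ?thesis using lll_trans[OF l1 l2] .
  qed
qed


end
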